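(* Let $(f_n)_{n\geqslant1}$ be a sequence of nondecreasing functions $f_n:[0,\infty)\to[0,\infty)$. Assume that there is an increasing sequence $(s_k)_{k\geqslant1}\subset[0,\infty)$ with $s_k\to\infty$ such that for each $k$ the sequence $(f_n(s_k))_{n\geqslant1}$ has a limit, denoted $f(s_k)$ (possibly $+\infty$), and let $\ell=\lim_{k\to\infty}f(s_k)$ (which exists since $(f(s_k))_k$ is nondecreasing). Then: (i) for any sequence $t_n\to\infty$, $\liminf_{n\to\infty}f_n(t_n)\geqslant\ell$; (ii) there exists a nondecreasing sequence $(t_n^* )_{n\geqslant1}$ with $t_n^*\to\infty$ such that $f_n(t_n^* )\to\ell$; (iii) if $(t_n^* )_{n\geqslant1}$ is as in (ii), then for any sequence $(t_n)_{n\geqslant1}$ with $0\leqslant t_n\leqslant t_n^*$ and $t_n\to\infty$, one has $f_n(t_n)\to\ell$. *)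

theory Defs
  imports "HOL-Analysis.Analysis"
begin

end

theory Submission
  imports Defs
begin

lemma conv_of:
  fixes X :: "nat \<Rightarrow> ereal"
  assumes "L \<le> liminf X" "limsup X \<le> L"
  shows "X \<longlonglongrightarrow> L"
proof -
  have "liminf X \<le> limsup X" by (rule Liminf_le_Limsup) simp
  then have "liminf X = L" "limsup X = L" using assms by auto
  then show ?thesis by (intro Liminf_eq_Limsup) auto
qed

theorem lemma2p2:
  fixes f :: "nat \<Rightarrow> real \<Rightarrow> real"
    and s :: "nat \<Rightarrow> real"
    and F :: "nat \<Rightarrow> ereal"
    and L :: ereal
  assumes f_mono: "\<And>n. mono_on {0..} (f n)"
    and f_nonneg: "\<And>n x. x \<ge> 0 \<Longrightarrow> f n x \<ge> 0"
    and s_incr: "strict_mono s"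
    and s_nonneg: "\<And>k. s k \<ge> 0"
    and s_lim: "filterlim s at_top sequentially"
    and F_def: "\<And>k. (\<lambda>n. ereal (f n (s k))) \<longlonglongrightarrow> F k"
    and l_def: "L = lim F"
  shows "(\<forall>t :: nat \<Rightarrow> real. (\<forall>n. t n \<ge> 0) \<longrightarrow> filterlim t at_top sequentially
            \<longrightarrow> liminf (\<lambda>n. ereal (f n (t n))) \<ge> L)
       \<and> (\<exists>tstar :: nat \<Rightarrow> real. (\<forall>n. tstar n \<ge> 0) \<and> mono tstar
            \<and> filterlim tstar at_top sequentially
            \<and> (\<lambda>n. ereal (f n (tstar n))) \<longlonglongrightarrow> L)
       \<and> (\<forall>tstar :: nat \<Rightarrow> real. ((\<forall>n. tstar n \<ge> 0) \<and> mono tstar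
            \<and> filterlim tstar at_top sequentially
            \<and> (\<lambda>n. ereal (f n (tstar n))) \<longlonglongrightarrow> L) \<longrightarrow>
            (\<forall>t :: nat \<Rightarrow> real. (\<forall>n. 0 \<le> t n \<and> t n \<le> tstar n)
               \<longrightarrow> filterlim t at_top sequentially
               \<longrightarrow> (\<lambda>n. ereal (f n (t n))) \<longlonglongrightarrow> L))"
proof -
  have Fmono: "incseq F"
    unfolding incseq_Suc_iff
  proof
    fix k
    show "F k \<le> F (Suc k)"
    proof (rule LIMSEQ_le[OF F_def F_def], intro exI allI impI)
      fix n
      show "ereal (f n (s k)) \<le> ereal (f n (s (Suc k)))"
        using mono_onD[OF f_mono] s_nonneg strict_monoD[OF s_incr, of k "Suc k"]
        by (simp add: less_imp_le)
    qed
  qed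
  have LS: "L = (SUP k. F k)" using l_def LIMSEQ_SUP[OF Fmono] limI by auto
  have FL: "\<And>k. F k \<le> L" by (simp add: LS SUP_upper)
  have part1: "L \<le> liminf (\<lambda>n. ereal (f n (t n)))"
    if tn: "\<forall>n. t n \<ge> 0" and tl: "filterlim t at_top sequentially" for t
  proof -
    have "F k \<le> liminf (\<lambda>n. ereal (f n (t n)))" for k
    proof -
      have ev: "eventually (\<lambda>n. s k \<le> t n) sequentially" using tl filterlim_at_top by auto
      have "F k = liminf (\<lambda>n. ereal (f n (s k)))" using lim_imp_Liminf[OF _ F_def] by simp
      also have "\<dots> \<le> liminf (\<lambda>n. ereal (f n (t n)))"
        apply (rule Liminf_mono)
        using ev by eventually_elim (use mono_onD[OF f_mono] s_nonneg tn in auto)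
      finally show ?thesis .
    qed
    then show ?thesis by (simp add: LS SUP_least)
  qed
  have F0: "0 \<le> F 0"
    by (rule LIMSEQ_le_const[OF F_def]) (use f_nonneg s_nonneg in auto)
  have L0: "0 \<le> L" using F0 FL[of 0] by auto
  have part2: "\<exists>tstar :: nat \<Rightarrow> real. (\<forall>n. tstar n \<ge> 0) \<and> mono tstar
            \<and> filterlim tstar at_top sequentially
            \<and> (\<lambda>n. ereal (f n (tstar n))) \<longlonglongrightarrow> L"
  proof (cases L)
    case PInf
    have "(\<lambda>n. ereal (f n (real n))) \<longlonglongrightarrow> L"
      by (rule conv_of) (use part1[of real] filterlim_real_sequentially PInf in auto)
    then show ?thesis using filterlim_real_sequentially
      by (intro exI[of _ real]) (auto simp: mono_def)
  next
    case MInf then show ?thesis using L0 by simp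
  next
    case (real l)
    define Q where "Q k n \<longleftrightarrow> (\<forall>m\<ge>n. f m (s k) < l + inverse (real (Suc k)))" for k n
    have Qup: "Q k n \<Longrightarrow> n \<le> n' \<Longrightarrow> Q k n'" for k n n' by (auto simp: Q_def)
    have Qev: "\<exists>N. Q k N" for k
    proof -
      have "ereal l < ereal (l + inverse (real (Suc k)))" by simp
      then have "F k < ereal (l + inverse (real (Suc k)))" using FL[of k] real
        by (metis order_le_less_trans)
      then have "eventually (\<lambda>n. ereal (f n (s k)) < ereal (l + inverse (real (Suc k)))) sequentially"
        using order_tendstoD(2)[OF F_def] by blast
      then show ?thesis by (auto simp: eventually_sequentially Q_def)
    qed
    define A where "A n = {k. k \<le> n \<and> Q k n}" for n
    define K where "K n = Max (insert 0 (A n))" for n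
    have finA: "finite (A n)" for n
      by (rule finite_subset[of _ "{..n}"]) (auto simp: A_def)
    have Kmono: "mono K"
    proof (rule monoI)
      fix n n' :: nat assume "n \<le> n'"
      then have "insert 0 (A n) \<subseteq> insert 0 (A n')" using Qup by (auto simp: A_def)
      then show "K n \<le> K n'" unfolding K_def by (rule Max_mono) (use finA in auto)
    qed
    have Klim: "filterlim K sequentially sequentially"
      unfolding filterlim_at_top
    proof
      fix Z
      obtain N where N: "Q Z N" using Qev by blast
      show "eventually (\<lambda>n. Z \<le> K n) sequentially"
        unfolding eventually_sequentially
      proof (intro exI[of _ "max N Z"] allI impI)
        fix n assume "max N Z \<le> n"
        then have "Z \<in> A n" using Qup[OF N] by (auto simp: A_def)
        then show "Z \<le> K n" unfolding K_def by (intro Max_ge) (use finA in auto)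
      qed
    qed
    obtain N0 where N0: "Q 0 N0" using Qev by blast
    have Kb: "eventually (\<lambda>n. f n (s (K n)) < l + inverse (real (Suc (K n)))) sequentially"
      unfolding eventually_sequentially
    proof (intro exI[of _ N0] allI impI)
      fix n assume "N0 \<le> n"
      then have "0 \<in> A n" using Qup[OF N0] by (auto simp: A_def)
      then have "K n \<in> A n" unfolding K_def using finA[of n]
        by (metis Max_in empty_iff finite_insert insert_absorb)
      then show "f n (s (K n)) < l + inverse (real (Suc (K n)))" by (auto simp: A_def Q_def)
    qed
    have lim2: "(\<lambda>n. ereal (l + inverse (real (Suc (K n))))) \<longlonglongrightarrow> ereal l"
    proof (intro tendsto_ereal)
      have "(\<lambda>n. inverse (real (Suc (K n)))) \<longlonglongrightarrow> 0"
        using filterlim_compose[OF LIMSEQ_inverse_real_of_nat Klim] by simp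
      then show "(\<lambda>n. l + inverse (real (Suc (K n)))) \<longlonglongrightarrow> l"
        using tendsto_add[OF tendsto_const, of _ 0 sequentially l] by simp
    qed
    have "limsup (\<lambda>n. ereal (f n (s (K n)))) \<le> limsup (\<lambda>n. ereal (l + inverse (real (Suc (K n)))))"
      by (rule Limsup_mono) (use Kb in \<open>eventually_elim, simp\<close>)
    also have "\<dots> = L" using lim_imp_Limsup[OF _ lim2] real by simp
    finally have ls: "limsup (\<lambda>n. ereal (f n (s (K n)))) \<le> L" .
    have tl: "filterlim (\<lambda>n. s (K n)) at_top sequentially"
      by (rule filterlim_compose[OF s_lim Klim])
    have "(\<lambda>n. ereal (f n (s (K n)))) \<longlonglongrightarrow> L"
      by (rule conv_of[OF part1 ls]) (use s_nonneg tl in auto)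
    moreover have "mono (\<lambda>n. s (K n))"
      using strict_mono_mono[OF s_incr] Kmono by (auto simp: mono_def)
    ultimately show ?thesis using s_nonneg tl by (intro exI[of _ "\<lambda>n. s (K n)"]) auto
  qed
  have part3: "(\<lambda>n. ereal (f n (t n))) \<longlonglongrightarrow> L"
    if ts: "(\<forall>n. tstar n \<ge> 0) \<and> mono tstar \<and> filterlim tstar at_top sequentially
            \<and> (\<lambda>n. ereal (f n (tstar n))) \<longlonglongrightarrow> L"
      and tt: "\<forall>n. 0 \<le> t n \<and> t n \<le> tstar n" and tl: "filterlim t at_top sequentially"
    for tstar t
  proof (rule conv_of)
    show "L \<le> liminf (\<lambda>n. ereal (f n (t n)))" using part1 tt tl by auto
    have "limsup (\<lambda>n. ereal (f n (t n))) \<le> limsup (\<lambda>n. ereal (f n (tstar n)))"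
      by (rule Limsup_mono) (use mono_onD[OF f_mono] tt in auto)
    also have "\<dots> = L" using lim_imp_Limsup[OF _ conjunct2[OF conjunct2[OF conjunct2[OF ts]]]] by simp
    finally show "limsup (\<lambda>n. ereal (f n (t n))) \<le> L" .
  qed
  show ?thesis using part1 part2 part3 by blast
qed

end
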